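(* In the two-SP bandwidth game with minimum small-cell bandwidth constraints, suppose exactly SP 2's constraint is violated by the unconstrained equilibrium, i.e. $B_{1,S}^{\mathrm{free}}\ge B_{1,S}^0$ and $B_{2,S}^{\mathrm{free}}<B_{2,S}^0$. Then the unique constrained Nash equilibrium $(B_{1,S}^*,B_{2,S}^* )$ satisfies $B_{2,S}^*=B_{2,S}^0$; that is, it is of one of the two types: (I) $B_{1,S}^*=B_{1,S}^0,\ B_{2,S}^*=B_{2,S}^0$; or (II) $B_{1,S}^*>B_{1,S}^0,\ B_{2,S}^*=B_{2,S}^0$. In particular, an equilibrium with $B_{1,S}^*=B_{1,S}^0$ and $B_{2,S}^*>B_{2,S}^0$ is impossible.
   Context: Fixed parameters: $\alpha\in(0,1)$; densities $N_m>0$ (mobile users) and $N_f>0$ (fixed users); spectral efficiency $R_0>0$; common small-cell density $\lambda_S>1$ (macro density normalized to 1); total bandwidths $B_1,B_2>0$; regulatory lower bounds $B_{i,S}^0\in[0,B_i]$. Utility $u(r)=\frac{r^{1-\alpha}}{1-\alpha}$, $u'(r)=r^{-\alpha}$. Let $\epsilon=\lambda_S^{1/\alpha-1}$. Two-SP bandwidth game: SP $i\in\{1,2\}$ chooses small-cell bandwidth $B_{i,S}\in[B_{i,S}^0,B_i]$ and sets $B_{i,M}=B_i-B_{i,S}$. Given a profile, prices are market-clearing, mobile users use macro-cells and fixed users use small-cells, so the average rates are $R_S=\frac{\lambda_S(B_{1,S}+B_{2,S})R_0}{N_f}$ and $R_M=\frac{(B_{1,M}+B_{2,M})R_0}{N_m}$,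 and SP $i$'s payoff (revenue) is $S_i=R_0B_{i,M}R_M^{-\alpha}+R_0\lambda_SB_{i,S}R_S^{-\alpha}$ (a term with zero bandwidth is $0$). This game has a unique pure Nash equilibrium. Define $B_{i,S}^{\mathrm{free}}=\frac{\epsilon N_fB_i}{\epsilon N_f+N_m}$, the equilibrium small-cell bandwidth of SP $i$ when there are no constraints ($B_{i,S}^0=0$). *)

theory Defs
  imports Complex_Main
begin

definition rate_S :: "real \<Rightarrow> real \<Rightarrow> real \<Rightarrow> real \<Rightarrow> real \<Rightarrow> real" where
  "rate_S R0 lamS Nf b1 b2 = lamS * (b1 + b2) * R0 / Nf"

definition rate_M :: "real \<Rightarrow> real \<Rightarrow> real \<Rightarrow> real \<Rightarrow> real \<Rightarrow> real \<Rightarrow> real" where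
  "rate_M R0 Nm B1 B2 b1 b2 = ((B1 - b1) + (B2 - b2)) * R0 / Nm"

definition rev_term :: "real \<Rightarrow> real \<Rightarrow> real \<Rightarrow> real" where
  "rev_term alpha w r = (if w = 0 then 0 else w * r powr (- alpha))"

definition sp_payoff ::
  "real \<Rightarrow> real \<Rightarrow> real \<Rightarrow> real \<Rightarrow> real \<Rightarrow> real \<Rightarrow> real \<Rightarrow> real \<Rightarrow> real \<Rightarrow> real \<Rightarrow> real \<Rightarrow> real" where
  "sp_payoff alpha R0 lamS Nm Nf B1 B2 b1 b2 bM bS =
     R0 * rev_term alpha bM (rate_M R0 Nm B1 B2 b1 b2)
   + R0 * lamS * rev_term alpha bS (rate_S R0 lamS Nf b1 b2)"

definition payoff1 where
  "payoff1 alpha R0 lamS Nm Nf B1 B2 b1 b2 =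
     sp_payoff alpha R0 lamS Nm Nf B1 B2 b1 b2 (B1 - b1) b1"

definition payoff2 where
  "payoff2 alpha R0 lamS Nm Nf B1 B2 b1 b2 =
     sp_payoff alpha R0 lamS Nm Nf B1 B2 b1 b2 (B2 - b2) b2"

definition is_NE where
  "is_NE alpha R0 lamS Nm Nf B1 B2 B10 B20 b1 b2 \<longleftrightarrow>
     b1 \<in> {B10..B1} \<and> b2 \<in> {B20..B2} \<and>
     (\<forall>x\<in>{B10..B1}. payoff1 alpha R0 lamS Nm Nf B1 B2 x b2 \<le> payoff1 alpha R0 lamS Nm Nf B1 B2 b1 b2) \<and>
     (\<forall>y\<in>{B20..B2}. payoff2 alpha R0 lamS Nm Nf B1 B2 b1 y \<le> payoff2 alpha R0 lamS Nm Nf B1 B2 b1 b2)"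

definition eps :: "real \<Rightarrow> real \<Rightarrow> real" where
  "eps alpha lamS = lamS powr (1 / alpha - 1)"

definition B_free :: "real \<Rightarrow> real \<Rightarrow> real \<Rightarrow> real \<Rightarrow> real \<Rightarrow> real" where
  "B_free alpha lamS Nm Nf Bi = eps alpha lamS * Nf * Bi / (eps alpha lamS * Nf + Nm)"

end

theory Submission
  imports Defs
begin

lemma rev_term_eq: "rev_term a w r = w * r powr (-a)"
  by (simp add: rev_term_def)

lemma left_sign:
  fixes f :: "real \<Rightarrow> real"
  assumes "DERIV f b :> D" "a < b" "\<forall>y\<in>{a..b}. f y \<le> f b"
  shows "0 \<le> D"
proof (rule ccontr)
  assume "\<not> 0 \<le> D"
  then have "D < 0" by simp
  from DERIV_neg_dec_left[OF assms(1) this] obtain d where d: "0 < d" "\<forall>h>0. h < d \<longrightarrow> f b < f (b - h)" by blast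
  define h where "h = min d (b - a) / 2"
  have "h > 0" "h < d" "h \<le> b - a" using d assms(2) by (auto simp: h_def)
  then have "f b < f (b - h)" using d by auto
  moreover have "b - h \<in> {a..b}" using \<open>h>0\<close> \<open>h \<le> b - a\<close> by auto
  ultimately show False using assms(3) by fastforce
qed

lemma right_sign:
  fixes f :: "real \<Rightarrow> real"
  assumes "DERIV f b :> D" "b < c" "\<forall>y\<in>{b..c}. f y \<le> f b"
  shows "D \<le> 0"
proof (rule ccontr)
  assume "\<not> D \<le> 0"
  then have "D > 0" by simp
  from DERIV_pos_inc_right[OF assms(1) this] obtain d where d: "0 < d" "\<forall>h>0. h < d \<longrightarrow> f b < f (b + h)" by blast
  define h where "h = min d (c - b) / 2"
  have "h > 0" "h < d" "h \<le> c - b" using d assms(2) by (auto simp: h_def)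
  then have "f b < f (b + h)" using d by auto
  moreover have "b + h \<in> {b..c}" using \<open>h>0\<close> \<open>h \<le> c - b\<close> by auto
  ultimately show False using assms(3) by fastforce
qed

lemma powr_m1: "(x::real) > 0 \<Longrightarrow> x powr (- a - 1) = x powr (-a) / x"
  by (simp add: powr_diff)

lemma deriv2:
  fixes alpha R0 lamS Nm Nf B1 B2 b1 z :: real
  assumes "0 < Nm" "0 < Nf" "0 < R0" "0 < lamS"
    and M: "rate_M R0 Nm B1 B2 b1 z > 0" and S: "rate_S R0 lamS Nf b1 z > 0"
  shows "((\<lambda>y. payoff2 alpha R0 lamS Nm Nf B1 B2 b1 y) has_real_derivative
     R0 * ((lamS * rate_S R0 lamS Nf b1 z powr (-alpha)) * (1 - alpha * z / (b1 + z))
         - rate_M R0 Nm B1 B2 b1 z powr (-alpha) * (1 - alpha * (B2 - z) / ((B1 - b1) + (B2 - z))))) (at z)"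
proof -
  define m where "m = ((B1 - b1) + (B2 - z)) * R0 / Nm"
  define s where "s = lamS * (b1 + z) * R0 / Nf"
  have mm: "m = rate_M R0 Nm B1 B2 b1 z" and ss: "s = rate_S R0 lamS Nf b1 z"
    by (simp_all add: m_def s_def rate_M_def rate_S_def)
  have Mp: "(B1 - b1) + (B2 - z) > 0" using M assms by (simp add: rate_M_def zero_less_divide_iff zero_less_mult_iff)
  have Sp: "b1 + z > 0" using S assms by (simp add: rate_S_def zero_less_mult_iff zero_less_divide_iff)
  have e: "payoff2 alpha R0 lamS Nm Nf B1 B2 b1 = (\<lambda>y. R0 * ((B2 - y) * (((B1 - b1) + (B2 - y)) * R0 / Nm) powr (-alpha))
       + R0 * lamS * (y * (lamS * (b1 + y) * R0 / Nf) powr (-alpha)))"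
    by (auto simp: payoff2_def sp_payoff_def rev_term_eq rate_M_def rate_S_def)
  have dm: "((\<lambda>y. ((B1 - b1) + (B2 - y)) * R0 / Nm) has_real_derivative (- R0 / Nm)) (at z)"
    using assms by (auto intro!: derivative_eq_intros)
  have ds: "((\<lambda>y. lamS * (b1 + y) * R0 / Nf) has_real_derivative (lamS * R0 / Nf)) (at z)"
    using assms by (auto intro!: derivative_eq_intros)
  have dM: "((\<lambda>y. (((B1 - b1) + (B2 - y)) * R0 / Nm) powr (-alpha)) has_real_derivative
      (-alpha) * m powr (-alpha - 1) * (- R0 / Nm)) (at z)"
    using DERIV_fun_powr[OF dm, where r="-alpha"] M mm by (simp add: m_def rate_M_def)
  have dS: "((\<lambda>y. (lamS * (b1 + y) * R0 / Nf) powr (-alpha)) has_real_derivative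
      (-alpha) * s powr (-alpha - 1) * (lamS * R0 / Nf)) (at z)"
    using DERIV_fun_powr[OF ds, where r="-alpha"] S ss by (simp add: s_def rate_S_def)
  have d: "((\<lambda>y. R0 * ((B2 - y) * (((B1 - b1) + (B2 - y)) * R0 / Nm) powr (-alpha))
       + R0 * lamS * (y * (lamS * (b1 + y) * R0 / Nf) powr (-alpha))) has_real_derivative
     R0 * ((-1) * m powr (-alpha) + (B2 - z) * ((-alpha) * m powr (-alpha - 1) * (- R0 / Nm)))
     + R0 * lamS * (1 * s powr (-alpha) + z * ((-alpha) * s powr (-alpha - 1) * (lamS * R0 / Nf)))) (at z)"
  proof -
    have l1: "((\<lambda>y. B2 - y) has_real_derivative -1) (at z)" by (auto intro!: derivative_eq_intros)
    have l2: "((\<lambda>y. y) has_real_derivative 1) (at z)" by (auto intro!: derivative_eq_intros)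
    show ?thesis
      apply (rule DERIV_cong[OF DERIV_add[OF DERIV_cmult[OF DERIV_mult[OF l1 dM], of R0] DERIV_cmult[OF DERIV_mult[OF l2 dS], of "R0*lamS"]]])
      by (simp add: m_def s_def algebra_simps)
  qed
  have m1: "m powr (-alpha - 1) = m powr (-alpha) / m" using M mm powr_m1 by auto
  have s1: "s powr (-alpha - 1) = s powr (-alpha) / s" using S ss powr_m1 by auto
  have eq: "R0 * ((-1) * m powr (-alpha) + (B2 - z) * ((-alpha) * m powr (-alpha - 1) * (- R0 / Nm)))
     + R0 * lamS * (1 * s powr (-alpha) + z * ((-alpha) * s powr (-alpha - 1) * (lamS * R0 / Nf)))
    = R0 * ((lamS * s powr (-alpha)) * (1 - alpha * z / (b1 + z))
         - m powr (-alpha) * (1 - alpha * (B2 - z) / ((B1 - b1) + (B2 - z))))"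
  proof -
    define X where "X = m powr (-alpha)"
    define Y where "Y = s powr (-alpha)"
    define D where "D = (B1 - b1) + (B2 - z)"
    define T where "T = b1 + z"
    have a0: "(X / m) * (R0 / Nm) = X / D"
      unfolding m_def D_def[symmetric] using Mp assms unfolding D_def[symmetric] by (simp add: field_simps)
    have a: "(B2 - z) * (X / m) * (R0 / Nm) = X * ((B2 - z) / ((B1 - b1) + (B2 - z)))"
      using arg_cong[OF a0, of "\<lambda>t. (B2 - z) * t"] unfolding D_def by (simp add: mult.assoc)
    have b0: "(Y / s) * (lamS * R0 / Nf) = Y / T"
      unfolding s_def T_def[symmetric] using Sp assms unfolding T_def[symmetric] by (simp add: field_simps)
    have b: "z * (Y / s) * (lamS * R0 / Nf) = Y * (z / (b1 + z))"
      using arg_cong[OF b0, of "\<lambda>t. z * t"] unfolding T_def by (simp add: mult.assoc)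
    have "R0 * ((-1) * X + (B2 - z) * ((-alpha) * (X / m) * (- R0 / Nm)))
     + R0 * lamS * (1 * Y + z * ((-alpha) * (Y / s) * (lamS * R0 / Nf)))
     = R0 * (-X + alpha * ((B2 - z) * (X / m) * (R0 / Nm))) + R0 * lamS * (Y - alpha * (z * (Y / s) * (lamS * R0 / Nf)))"
      by (simp add: algebra_simps diff_divide_distrib)
    also have "\<dots> = R0 * (-X + alpha * (X * ((B2 - z) / ((B1 - b1) + (B2 - z))))) + R0 * lamS * (Y - alpha * (Y * (z / (b1 + z))))"
      by (simp only: a b)
    also have "\<dots> = R0 * ((lamS * Y) * (1 - alpha * z / (b1 + z))
         - X * (1 - alpha * (B2 - z) / ((B1 - b1) + (B2 - z))))"
      by (simp add: algebra_simps)
    finally show ?thesis unfolding m1 s1 X_def Y_def .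
  qed
  show ?thesis unfolding e using d[unfolded eq] unfolding mm ss .
qed
lemma payoff1_swap: "payoff1 alpha R0 lamS Nm Nf B1 B2 x b2 = payoff2 alpha R0 lamS Nm Nf B2 B1 b2 x"
  by (simp add: payoff1_def payoff2_def sp_payoff_def rate_M_def rate_S_def algebra_simps)

lemma core_ineq:
  fixes X Y alpha p q :: real
  assumes "X > 0" "Y > 0" "0 < alpha" "alpha < 1"
    and "Y * (1 - alpha * p) - X * (1 - alpha * q) \<ge> 0"
    and "Y * (1 - alpha * (1 - p)) - X * (1 - alpha * (1 - q)) \<le> 0"
    and "p \<le> 1" "q \<le> 1" "0 \<le> p" "0 \<le> q"
  shows "p \<le> q"
proof (rule ccontr)
  assume "\<not> p \<le> q" then have pq: "q < p" by simp
  have ap: "alpha * p \<le> alpha" "alpha * (1-p) \<le> alpha" using assms by (auto intro: mult_left_le)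
  have aq: "alpha * q < alpha * p" "alpha * (1-p) < alpha * (1 - q)" using assms pq by auto
  define A where "A = 1 - alpha * (1 - p)"
  define A' where "A' = 1 - alpha * (1 - q)"
  define P where "P = 1 - alpha * p"
  define Q where "Q = 1 - alpha * q"
  have pos: "A > 0" "P > 0" "A' < A" "P < Q" unfolding A_def A'_def P_def Q_def using ap aq assms(4) by linarith+
  have "Y * A \<le> X * A'" using assms(6) by (simp add: A_def A'_def)
  also have "\<dots> < X * A" using pos assms(1) by simp
  finally have "Y < X" using pos(1) by simp
  have "X * Q \<le> Y * P" using assms(5) by (simp add: P_def Q_def)
  also have "\<dots> < X * P" using \<open>Y < X\<close> pos(2) by simp
  finally show False using pos assms(1) by simp
qed

lemma core_eq:
  fixes X Y alpha p q :: real
  assumes "X > 0" "Y > 0" "0 < alpha" "alpha < 1"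
    and "Y * (1 - alpha * p) - X * (1 - alpha * q) = 0"
    and "Y * (1 - alpha * (1 - p)) - X * (1 - alpha * (1 - q)) = 0"
    and "p \<le> 1" "q \<le> 1" "0 \<le> p" "0 \<le> q"
  shows "X = Y \<and> p = q"
proof -
  have "(2 - alpha) * (Y - X) = 0" using assms(5,6) by (simp add: algebra_simps)
  then have "X = Y" using assms by simp
  then have "X * alpha * (q - p) = 0" using assms(5) by (simp add: algebra_simps)
  then show ?thesis using assms \<open>X = Y\<close> by simp
qed
lemma eqrates:
  fixes rm rs lamS alpha :: real
  assumes "rm > 0" "rs > 0" "lamS > 0" "alpha > 0" "lamS * rs powr (-alpha) = rm powr (-alpha)"
  shows "rs = lamS powr (1 / alpha) * rm"
proof -
  have f1: "(lamS * rs powr (-alpha)) powr (-1/alpha) = (rm powr (-alpha)) powr (-1/alpha)" using assms(5) by (rule arg_cong)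
  have f2: "(lamS * rs powr (-alpha)) powr (-1/alpha) = lamS powr (-1/alpha) * rs"
    using assms(1-4) by (simp add: powr_mult powr_powr)
  have f3: "(rm powr (-alpha)) powr (-1/alpha) = rm"
    using assms by (simp add: powr_powr)
  have "lamS powr (-1/alpha) * rs = rm" using f1 f2 f3 by simp
  then have g: "lamS powr (1/alpha) * (lamS powr (-1/alpha) * rs) = lamS powr (1/alpha) * rm" by simp
  have h: "lamS powr (1/alpha) * lamS powr (-1/alpha) = 1"
    using assms by (simp add: powr_add[symmetric])
  have "lamS powr (1/alpha) * (lamS powr (-1/alpha) * rs) = rs"
    by (simp only: mult.assoc[symmetric] h mult_1_left)
  then show ?thesis using g by (metis)
qed

lemma corner:
  fixes alpha R0 lamS Nm Nf B1 B2 B20 :: real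
  assumes "0 < alpha" "alpha < 1" "0 < Nm" "0 < Nf" "0 < R0" "1 < lamS"
    and "0 < B1" "0 \<le> B20" "B20 < B2"
  shows "\<exists>y\<in>{B20..B2}. payoff2 alpha R0 lamS Nm Nf B1 B2 B1 y > payoff2 alpha R0 lamS Nm Nf B1 B2 B1 B2"
proof -
  define r where "r = (\<lambda>y. lamS * (B1 + y) * R0 / Nf)"
  define r0 where "r0 = lamS * B1 * R0 / Nf"
  have r0p: "r0 > 0" using assms by (simp add: r0_def)
  define K where "K = lamS * r0 powr (-alpha)"
  have Kp: "K > 0" using assms r0p by (simp add: K_def)
  define c where "c = (Nm / R0) * K powr (-1/alpha)"
  have cp: "c > 0" using assms Kp by (simp add: c_def)
  define t where "t = min (B2 - B20) c / 2"
  have tp: "t > 0" "t \<le> B2 - B20" "t < c" using cp assms by (auto simp: t_def)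
  define y where "y = B2 - t"
  have yin: "y \<in> {B20..B2}" using tp by (auto simp: y_def)
  have y0: "y \<ge> 0" using yin assms by auto
  have P2: "payoff2 alpha R0 lamS Nm Nf B1 B2 B1 z = R0 * ((B2 - z) * ((B2 - z) * R0 / Nm) powr (-alpha)) + R0 * lamS * (z * r z powr (-alpha))" for z
    by (simp add: payoff2_def sp_payoff_def rev_term_eq rate_M_def rate_S_def r_def)
  have ry: "r y \<ge> r0" "r y \<le> r B2" using y0 assms yin by (auto simp: r_def r0_def divide_right_mono)
  have r0y: "r y powr (-alpha) \<le> r0 powr (-alpha)" using powr_mono2'[of "-alpha" r0 "r y"] ry r0p assms by simp
  have ryB: "r B2 powr (-alpha) \<le> r y powr (-alpha)" using powr_mono2'[of "-alpha" "r y" "r B2"] ry r0p assms by simp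
  have diff: "B2 * r B2 powr (-alpha) - y * r y powr (-alpha) \<le> t * r0 powr (-alpha)"
  proof -
    have "B2 * r B2 powr (-alpha) \<le> B2 * r y powr (-alpha)" using ryB assms by (simp add: mult_left_mono)
    moreover have "(B2 - y) * r y powr (-alpha) \<le> t * r0 powr (-alpha)" using r0y tp by (simp add: y_def mult_left_mono)
    ultimately show ?thesis by (simp add: algebra_simps)
  qed
  have small: "t * R0 / Nm < K powr (-1/alpha)" using tp assms by (simp add: c_def field_simps)
  have "(K powr (-1/alpha)) powr (-alpha) < (t * R0 / Nm) powr (-alpha)"
    using powr_less_mono2_neg[OF _ _ small, of "-alpha"] tp assms by simp
  moreover have "(K powr (-1/alpha)) powr (-alpha) = K" using Kp assms by (simp add: powr_powr)
  ultimately have big: "K < (t * R0 / Nm) powr (-alpha)" by simp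
  have "payoff2 alpha R0 lamS Nm Nf B1 B2 B1 y - payoff2 alpha R0 lamS Nm Nf B1 B2 B1 B2
      = R0 * (t * (t * R0 / Nm) powr (-alpha)) - R0 * lamS * (B2 * r B2 powr (-alpha) - y * r y powr (-alpha))"
    unfolding P2 by (simp add: y_def algebra_simps)
  also have "\<dots> \<ge> R0 * (t * (t * R0 / Nm) powr (-alpha)) - R0 * lamS * (t * r0 powr (-alpha))"
    using diff assms by (simp add: mult_left_mono)
  also have "R0 * (t * (t * R0 / Nm) powr (-alpha)) - R0 * lamS * (t * r0 powr (-alpha)) = R0 * t * ((t * R0 / Nm) powr (-alpha) - K)"
    by (simp add: K_def algebra_simps)
  finally have "payoff2 alpha R0 lamS Nm Nf B1 B2 B1 y - payoff2 alpha R0 lamS Nm Nf B1 B2 B1 B2 \<ge> R0 * t * ((t * R0 / Nm) powr (-alpha) - K)" .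
  moreover have "R0 * t * ((t * R0 / Nm) powr (-alpha) - K) > 0" using big tp assms by simp
  ultimately show ?thesis using yin by force
qed
theorem proposition2:
  fixes alpha R0 lamS Nm Nf B1 B2 B10 B20 b1 b2 :: real
  assumes "0 < alpha" "alpha < 1" "0 < Nm" "0 < Nf" "0 < R0" "1 < lamS"
    and "0 < B1" "0 < B2"
    and "0 \<le> B10" "B10 \<le> B1" "0 \<le> B20" "B20 \<le> B2"
    and "B_free alpha lamS Nm Nf B1 \<ge> B10"
    and "B_free alpha lamS Nm Nf B2 < B20"
    and "is_NE alpha R0 lamS Nm Nf B1 B2 B10 B20 b1 b2"
  shows "b2 = B20 \<and> (b1 = B10 \<or> b1 > B10)"
proof -
  note A = assms
  have b1r: "B10 \<le> b1" "b1 \<le> B1" and b2r: "B20 \<le> b2" "b2 \<le> B2"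
    and br1: "\<forall>x\<in>{B10..B1}. payoff1 alpha R0 lamS Nm Nf B1 B2 x b2 \<le> payoff1 alpha R0 lamS Nm Nf B1 B2 b1 b2"
    and br2: "\<forall>y\<in>{B20..B2}. payoff2 alpha R0 lamS Nm Nf B1 B2 b1 y \<le> payoff2 alpha R0 lamS Nm Nf B1 B2 b1 b2"
    using assms(15) unfolding is_NE_def by auto
  define e where "e = eps alpha lamS"
  have ep: "e > 0" using A by (simp add: e_def eps_def)
  define th where "th = e * Nf / (e * Nf + Nm)"
  have den: "e * Nf + Nm > 0" using ep A(3,4) by (simp add: add_pos_pos)
  have thp: "0 < th" "th < 1" using ep A den by (simp_all add: th_def divide_less_eq)
  have bf: "B_free alpha lamS Nm Nf Bi = th * Bi" for Bi
    by (simp add: B_free_def th_def e_def)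
  have B10th: "B10 \<le> th * B1" using A(13) bf by simp
  have B20th: "th * B2 < B20" using A(14) bf by simp
  have B10lt: "B10 < B1" using B10th thp A(7) by (smt (verit) mult_less_cancel_right2)
  have "b2 = B20"
  proof (rule ccontr)
    assume "b2 \<noteq> B20"
    then have b2g: "B20 < b2" using b2r by simp
    have b2p: "b2 > 0" using b2g A by simp
    have b1p: "b1 \<ge> 0" using b1r A by simp
    define S where "S = b1 + b2"
    define C where "C = (B1 - b1) + (B2 - b2)"
    have Sp: "S > 0" using b1p b2p by (simp add: S_def)
    have C0: "C \<ge> 0" using b1r b2r by (simp add: C_def)
    show False
    proof (cases "C = 0")
      case True
      then have "b1 = B1" "b2 = B2" using b1r b2r by (auto simp: C_def)
      have "B20 < B2" using b2g \<open>b2 = B2\<close> by simp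
      from corner[OF A(1-6) A(7) A(11) this] obtain y where "y \<in> {B20..B2}"
        "payoff2 alpha R0 lamS Nm Nf B1 B2 B1 y > payoff2 alpha R0 lamS Nm Nf B1 B2 B1 B2" by auto
      then show False using br2 \<open>b1 = B1\<close> \<open>b2 = B2\<close> by fastforce
    next
      case False
      then have Cp: "C > 0" using C0 by simp
      have rM: "rate_M R0 Nm B1 B2 b1 b2 > 0" using Cp A by (simp add: rate_M_def C_def)
      have rS: "rate_S R0 lamS Nf b1 b2 > 0" using Sp A by (simp add: rate_S_def S_def)
      define X where "X = rate_M R0 Nm B1 B2 b1 b2 powr (-alpha)"
      define Y where "Y = lamS * rate_S R0 lamS Nf b1 b2 powr (-alpha)"
      have Xp: "X > 0" using rM by (simp add: X_def)
      have Yp: "Y > 0" using rS A by (simp add: Y_def)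
      define p where "p = b2 / S"
      define q where "q = (B2 - b2) / C"
      have p01: "0 \<le> p" "p \<le> 1" using b1p b2p Sp by (auto simp: p_def S_def)
      have q01: "0 \<le> q" "q \<le> 1" using b1r b2r Cp by (auto simp: q_def C_def)
      have p1: "b1 / S = 1 - p" using Sp by (simp add: p_def S_def field_simps)
      have q1: "(B1 - b1) / C = 1 - q" using Cp by (simp add: q_def C_def field_simps)
      define E1 where "E1 = Y * (1 - alpha * (1 - p)) - X * (1 - alpha * (1 - q))"
      define E2 where "E2 = Y * (1 - alpha * p) - X * (1 - alpha * q)"
      have d2: "((\<lambda>y. payoff2 alpha R0 lamS Nm Nf B1 B2 b1 y) has_real_derivative R0 * E2) (at b2)"
        using deriv2[OF A(3,4,5) _ rM rS, of alpha] A(6)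
        by (simp add: E2_def X_def Y_def p_def q_def S_def C_def mult.assoc)
      have d1: "((\<lambda>x. payoff1 alpha R0 lamS Nm Nf B1 B2 x b2) has_real_derivative R0 * E1) (at b1)"
      proof -
        have rM': "rate_M R0 Nm B2 B1 b2 b1 = rate_M R0 Nm B1 B2 b1 b2" by (simp add: rate_M_def algebra_simps)
        have rS': "rate_S R0 lamS Nf b2 b1 = rate_S R0 lamS Nf b1 b2" by (simp add: rate_S_def algebra_simps)
        have "((\<lambda>y. payoff2 alpha R0 lamS Nm Nf B2 B1 b2 y) has_real_derivative
           R0 * ((lamS * rate_S R0 lamS Nf b1 b2 powr (-alpha)) * (1 - alpha * b1 / (b2 + b1))
         - rate_M R0 Nm B1 B2 b1 b2 powr (-alpha) * (1 - alpha * (B1 - b1) / ((B2 - b2) + (B1 - b1))))) (at b1)"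
          using deriv2[OF A(3,4,5) _ , of lamS B2 B1 b2 b1 alpha] rM rS A(6) rM' rS' by simp
        moreover have "b2 + b1 = S" "(B2 - b2) + (B1 - b1) = C" by (simp_all add: S_def C_def)
        ultimately have "((\<lambda>y. payoff2 alpha R0 lamS Nm Nf B2 B1 b2 y) has_real_derivative R0 * E1) (at b1)"
          using p1 q1 by (simp add: E1_def X_def Y_def mult.assoc times_divide_eq_right[symmetric] del: times_divide_eq_right)
        then show ?thesis by (simp add: payoff1_swap)
      qed
      have E2ge: "E2 \<ge> 0"
      proof -
        have "0 \<le> R0 * E2" by (rule left_sign[OF d2 b2g]) (use br2 b2r in auto)
        then show ?thesis using A(5) by (simp add: zero_le_mult_iff)
      qed
      have E1ge: "b1 > B10 \<Longrightarrow> E1 \<ge> 0"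
      proof -
        assume h: "b1 > B10"
        have "0 \<le> R0 * E1" by (rule left_sign[OF d1 h]) (use br1 b1r in auto)
        then show ?thesis using A(5) by (simp add: zero_le_mult_iff)
      qed
      have E1le: "b1 < B1 \<Longrightarrow> E1 \<le> 0"
      proof -
        assume h: "b1 < B1"
        have "R0 * E1 \<le> 0" by (rule right_sign[OF d1 h]) (use br1 b1r in auto)
        then show ?thesis using A(5) by (simp add: mult_le_0_iff)
      qed
      have E2le: "b2 < B2 \<Longrightarrow> E2 \<le> 0"
      proof -
        assume h: "b2 < B2"
        have "R0 * E2 \<le> 0" by (rule right_sign[OF d2 h]) (use br2 b2r in auto)
        then show ?thesis using A(5) by (simp add: mult_le_0_iff)
      qed
      show False
      proof (cases "b1 < B1")
        case True
        have "p \<le> q" using core_ineq[OF Xp Yp A(1,2) _ _ p01(2) q01(2) p01(1) q01(1)]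
          E2ge E1le[OF True] by (simp add: E1_def E2_def)
        then have "b2 * C \<le> (B2 - b2) * S" using Sp Cp by (simp add: p_def q_def field_simps)
        then have key: "b2 * B1 \<le> B2 * b1" by (simp add: S_def C_def algebra_simps)
        have "th * B2 * B1 < b2 * B1" using B20th b2g A(7) by simp
        also have "\<dots> \<le> B2 * b1" by (rule key)
        finally have "th * B1 < b1" using A(8) by (simp add: mult.commute mult.left_commute)
        then have b1g: "b1 > B10" using B10th by simp
        have "B2 * b1 < B2 * B1" using True A(8) by simp
        then have b2l: "b2 < B2" using key A(7) by (smt (verit) mult_less_cancel_right mult.commute)
        have "X = Y \<and> p = q" using core_eq[OF Xp Yp A(1,2) _ _ p01(2) q01(2) p01(1) q01(1)]
          E2ge E1le[OF True] E1ge[OF b1g] E2le[OF b2l] by (simp add: E1_def E2_def)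
        then have XY: "X = Y" and pq: "p = q" by auto
        have pq2: "b2 * C = (B2 - b2) * S" using pq Sp Cp by (simp add: p_def q_def field_simps)
        have "rate_S R0 lamS Nf b1 b2 = lamS powr (1/alpha) * rate_M R0 Nm B1 B2 b1 b2"
          by (rule eqrates[OF rM rS]) (use A XY in \<open>auto simp: X_def Y_def\<close>)
        moreover have "lamS powr (1/alpha) = lamS * e"
          using A by (simp add: e_def eps_def powr_diff)
        ultimately have "lamS * S * R0 / Nf = lamS * e * (C * R0 / Nm)"
          by (simp add: rate_S_def rate_M_def S_def C_def mult.assoc)
        then have r1: "S * Nm = e * Nf * C" using A by (simp add: field_simps)
        have "b2 * (e * Nf + Nm) * (S + C) = B2 * e * Nf * (S + C)"
        proof -
          have pq3: "b2 * (S + C) = B2 * S" using pq2 by (simp add: algebra_simps)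
          have "b2 * (e * Nf + Nm) * (S + C) = (e * Nf + Nm) * (b2 * (S + C))" by (simp add: algebra_simps)
          also have "\<dots> = B2 * (e * Nf * S + S * Nm)" using pq3 by (simp add: algebra_simps)
          also have "\<dots> = B2 * (e * Nf * S + e * Nf * C)" using r1 by simp
          also have "\<dots> = B2 * e * Nf * (S + C)" by (simp add: algebra_simps)
          finally show ?thesis .
        qed
        then have "b2 * (e * Nf + Nm) = B2 * e * Nf" using Sp Cp by simp
        then have "b2 = th * B2" using den by (simp add: th_def eq_divide_eq mult.commute mult.left_commute)
        then show False using B20th b2g by simp
      next
        case False
        then have b1B: "b1 = B1" using b1r by simp
        then have b2l: "b2 < B2" using Cp b2r by (simp add: C_def)
        have b1g: "b1 > B10" using b1B B10lt by simp
        have q0: "1 - q = 0" using q1 b1B by simp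
        have "1 - p \<le> 1 - q"
          using core_ineq[OF Xp Yp A(1,2), of "1 - p" "1 - q"] E1ge[OF b1g] E2le[OF b2l] p01 q01
          by (simp add: E1_def E2_def)
        then have "b1 / S \<le> 0" using p1 q0 by simp
        then show False using b1B A(7) Sp by (simp add: divide_le_0_iff)
      qed
    qed
  qed
  then show ?thesis using b1r by auto
qed
end
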